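(* Let $\pi$ be uniformly distributed on $\mathrm{PF}_n$ and let $X$ be a Borel random variable, $P(X=m)=e^{-m}m^{m-1}/m!$ for $m=1,2,\dots$. For each fixed integer $j\ge 0$, $$P(\pi_1=n-j)\sim\frac{P(X\le j+1)}{n}\qquad(n\to\infty).$$ In particular $P(\pi_1=n)\sim 1/(en)$.
   Context: A parking function of length $n$ is a sequence $(\pi_1,\dots,\pi_n)$ with $1\le\pi_i\le n$ such that $\#\{t:\pi_t\le i\}\ge i$ for all $1\le i\le n$; $\mathrm{PF}_n$ denotes the set of these. $a_n\sim b_n$ means $a_n/b_n\to1$. *)

theory Defs
  imports "HOL-Analysis.Analysis" "HOL-Library.Landau_Symbols"
begin

text \<open>Parking functions of length n, as lists (pi_1,...,pi_n) = (p!0,...,p!(n-1)).\<close>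
definition PF :: "nat \<Rightarrow> nat list set" where
  "PF n = {p. length p = n \<and> (\<forall>t<n. 1 \<le> p ! t \<and> p ! t \<le> n) \<and>
              (\<forall>i\<in>{1..n}. i \<le> card {t. t < n \<and> p ! t \<le> i})}"

definition prob_first :: "nat \<Rightarrow> nat \<Rightarrow> real" where
  "prob_first n k = real (card {p \<in> PF n. p ! 0 = k}) / real (card (PF n))"

definition borel_pmf :: "nat \<Rightarrow> real" where
  "borel_pmf m = (if m \<ge> 1 then exp (- real m) * real m ^ (m - 1) / fact m else 0)"

definition borel_cdf :: "nat \<Rightarrow> real" where
  "borel_cdf j = (\<Sum>m=1..j. borel_pmf m)"

end

theory Submission
  imports Defs "HOL-Real_Asymp.Real_Asymp"
begin


definition pff :: "nat set \<Rightarrow> nat \<Rightarrow> nat \<Rightarrow> (nat \<Rightarrow> nat) set" where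
  "pff I off m = {g. g \<in> I \<rightarrow>\<^sub>E {off+1..off+m} \<and> (\<forall>i\<in>{1..m}. i \<le> card {t\<in>I. g t \<le> off+i})}"

definition Pc :: "nat \<Rightarrow> nat" where "Pc m = card (pff {..<m} 0 m)"

lemma card_bij_filter:
  assumes "bij_betw \<sigma> A B"
  shows "card {u\<in>A. P (\<sigma> u)} = card {t\<in>B. P t}"
proof -
  have "bij_betw \<sigma> {u\<in>A. P (\<sigma> u)} {t\<in>B. P t}"
    by (rule bij_betw_subset[OF assms]) (use assms in \<open>auto simp: bij_betw_def\<close>)
  then show ?thesis by (rule bij_betw_same_card)
qed

lemma pff_reindex:
  assumes fin: "finite I" and cI: "card I = m"
  shows "card (pff I off m) = Pc m"
proof -
  obtain \<sigma> where \<sigma>: "bij_betw \<sigma> {..<m} I"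
    using ex_bij_betw_nat_finite[OF fin] cI by (auto simp: lessThan_atLeast0)
  define \<tau> where "\<tau> = the_inv_into {..<m} \<sigma>"
  have \<tau>: "bij_betw \<tau> I {..<m}" unfolding \<tau>_def by (rule bij_betw_the_inv_into[OF \<sigma>])
  have \<sigma>\<tau>: "\<And>t. t \<in> I \<Longrightarrow> \<sigma> (\<tau> t) = t" unfolding \<tau>_def
    using \<sigma> by (simp add: bij_betw_def f_the_inv_into_f)
  have \<tau>\<sigma>: "\<And>u. u < m \<Longrightarrow> \<tau> (\<sigma> u) = u" unfolding \<tau>_def
    using \<sigma> by (simp add: bij_betw_def the_inv_into_f_f)
  have \<sigma>I: "\<And>u. u < m \<Longrightarrow> \<sigma> u \<in> I" using \<sigma> by (auto simp: bij_betw_def)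
  have \<tau>I: "\<And>t. t \<in> I \<Longrightarrow> \<tau> t < m" using \<tau> by (auto simp: bij_betw_def)
  define Fm where "Fm = (\<lambda>g. \<lambda>u\<in>{..<m}. g (\<sigma> u) - off)"
  define Gm where "Gm = (\<lambda>y. \<lambda>t\<in>I. y (\<tau> t) + off)"
  have "bij_betw Fm (pff I off m) (pff {..<m} 0 m)"
  proof (rule bij_betwI)
    show "Fm \<in> pff I off m \<rightarrow> pff {..<m} 0 m"
    proof
      fix g assume g: "g \<in> pff I off m"
      have r: "\<And>t. t \<in> I \<Longrightarrow> g t \<in> {off+1..off+m}" using g by (auto simp: pff_def)
      have "\<And>i. card {u\<in>{..<m}. Fm g u \<le> i} = card {t\<in>I. g t \<le> off + i}"
      proof -
        fix i
        have "card {u\<in>{..<m}. Fm g u \<le> i} = card {u\<in>{..<m}. g (\<sigma> u) \<le> off + i}"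
          by (rule arg_cong[where f=card]) (use r \<sigma>I in \<open>force simp: Fm_def\<close>)
        also have "\<dots> = card {t\<in>I. g t \<le> off + i}"
          by (rule card_bij_filter[OF \<sigma>])
        finally show "card {u\<in>{..<m}. Fm g u \<le> i} = card {t\<in>I. g t \<le> off + i}" .
      qed
      then show "Fm g \<in> pff {..<m} 0 m" using g r \<sigma>I
        by (force simp: pff_def Fm_def)
    qed
    show "Gm \<in> pff {..<m} 0 m \<rightarrow> pff I off m"
    proof
      fix y assume y: "y \<in> pff {..<m} 0 m"
      have r: "\<And>u. u < m \<Longrightarrow> y u \<in> {1..m}" using y by (auto simp: pff_def)
      have "\<And>i. card {t\<in>I. Gm y t \<le> off + i} = card {u\<in>{..<m}. y u \<le> i}"
      proof -
        fix i
        have "card {t\<in>I. Gm y t \<le> off + i} = card {t\<in>I. y (\<tau> t) \<le> i}"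
          by (rule arg_cong[where f=card]) (auto simp: Gm_def)
        also have "\<dots> = card {u\<in>{..<m}. y u \<le> i}"
          by (rule card_bij_filter[OF \<tau>])
        finally show "card {t\<in>I. Gm y t \<le> off + i} = card {u\<in>{..<m}. y u \<le> i}" .
      qed
      then show "Gm y \<in> pff I off m" using y r \<tau>I
        by (force simp: pff_def Gm_def)
    qed
    show "Gm (Fm g) = g" if "g \<in> pff I off m" for g
    proof
      fix t
      show "Gm (Fm g) t = g t"
      proof (cases "t \<in> I")
        case True
        then have "g t \<ge> off+1" using that by (auto simp: pff_def)
        then show ?thesis using True \<tau>I \<sigma>\<tau> by (simp add: Gm_def Fm_def)
      next
        case False then show ?thesis using that by (auto simp: Gm_def pff_def PiE_def extensional_def)
      qed
    qed
    show "Fm (Gm y) = y" if "y \<in> pff {..<m} 0 m" for y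
    proof
      fix u show "Fm (Gm y) u = y u"
        using that \<sigma>I \<tau>\<sigma> by (auto simp: Gm_def Fm_def pff_def PiE_def extensional_def)
    qed
  qed
  then show ?thesis unfolding Pc_def by (rule bij_betw_same_card)
qed

lemma cycle:
  fixes F :: "nat \<Rightarrow> int"
  assumes N: "N \<ge> 1" and per: "\<And>i. F (N+i) = F i - 1"
  shows "\<exists>!r. r < N \<and> (\<forall>i\<in>{1..<N}. F r \<le> F (r+i))"
proof -
  define Q where "Q = (\<lambda>r. \<forall>i\<in>{1..<N}. F r \<le> F (r+i))"
  have uniq: False if ab: "a < b" "b < N" "Q a" "Q b" for a b
  proof -
    have "b - a \<in> {1..<N}" using ab by auto
    then have "F a \<le> F (a + (b - a))" using ab(3) unfolding Q_def by blast
    then have 1: "F a \<le> F b" using ab by simp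
    have "a + N - b \<in> {1..<N}" using ab by auto
    then have "F b \<le> F (b + (a + N - b))" using ab(4) unfolding Q_def by blast
    also have "b + (a + N - b) = N + a" using ab by simp
    finally have "F b \<le> F a - 1" using per by simp
    with 1 show False by simp
  qed
  define M where "M = Min (F ` {..<N})"
  have Mle: "\<And>q. q < N \<Longrightarrow> M \<le> F q" unfolding M_def by simp
  have "M \<in> F ` {..<N}" unfolding M_def using N by (intro Min_in) (auto simp: lessThan_empty_iff)
  then have ex: "\<exists>q. q < N \<and> F q = M" by auto
  define r where "r = (LEAST q. q < N \<and> F q = M)"
  have r: "r < N \<and> F r = M" unfolding r_def by (rule LeastI_ex[OF ex])
  have rl: "F q \<noteq> M" if "q < r" for q
    using not_less_Least[of q "\<lambda>q. q < N \<and> F q = M"] that r unfolding r_def[symmetric] by auto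
  have Qr: "Q r" unfolding Q_def
  proof
    fix i assume i: "i \<in> {1..<N}"
    show "F r \<le> F (r+i)"
    proof (cases "r + i < N")
      case True then show ?thesis using r Mle by simp
    next
      case False
      define q where "q = r + i - N"
      have q: "q < r" "r + i = N + q" using False i r by (auto simp: q_def)
      have "M \<le> F q" "F q \<noteq> M" using q r Mle rl by auto
      then show ?thesis using q per r by simp
    qed
  qed
  have "\<exists>!r. r < N \<and> Q r"
  proof (rule ex1I[of _ r])
    show "r < N \<and> Q r" using r Qr by simp
    fix r' assume r': "r' < N \<and> Q r'"
    show "r' = r"
    proof (rule ccontr)
      assume "r' \<noteq> r"
      then have "r' < r \<or> r < r'" by auto
      then show False using uniq r r' Qr by blast
    qed
  qed
  then show ?thesis unfolding Q_def .
qed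



lemma cnt_lt:
  assumes "finite A"
  shows "card {t\<in>A. f t < i} = (\<Sum>w<i. card {t\<in>A. f t = (w::nat)})"
proof (induction i)
  case 0 then show ?case by simp
next
  case (Suc i)
  have "{t\<in>A. f t < Suc i} = {t\<in>A. f t < i} \<union> {t\<in>A. f t = i}" by auto
  moreover have "card ({t\<in>A. f t < i} \<union> {t\<in>A. f t = i}) = card {t\<in>A. f t < i} + card {t\<in>A. f t = i}"
    by (rule card_Un_disjoint) (use assms in auto)
  ultimately show ?case using Suc by simp
qed

lemma mod2: "(a::nat) < 2*N \<Longrightarrow> a mod N = (if a < N then a else a - N)"
proof (cases "a < N")
  case False
  assume a: "a < 2*N"
  then have "a - N < N" using False by simp
  then show ?thesis using False by (simp add: le_mod_geq)
qed simp

lemma modeq: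
  fixes x c w N :: nat
  assumes "x < N" "c < N" "w < N"
  shows "((x + c) mod N = w) \<longleftrightarrow> (x = (w + N - c) mod N)"
proof -
  have a: "x + c < 2*N" "w + N - c < 2*N" using assms by auto
  show ?thesis unfolding mod2[OF a(1)] mod2[OF a(2)] using assms by auto
qed

lemma sum_split: "(\<Sum>v<r+i. g v) = (\<Sum>v<r. g v) + (\<Sum>w<i. g (w + r))" for g :: "nat \<Rightarrow> int"
  by (induction i) (simp_all add: add.commute)

lemma shift_unique:
  assumes n: "n \<ge> 1" and s: "s \<in> {..<n} \<rightarrow>\<^sub>E {..n}"
  shows "card {c\<in>{..<Suc n}. (\<lambda>t\<in>{..<n}. (s t + c) mod Suc n + 1) \<in> pff {..<n} 0 n} = 1"
proof -
  define N where "N = Suc n"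
  define a where "a = (\<lambda>v. card {t\<in>{..<n}. s t = v})"
  define g where "g = (\<lambda>v. int (a (v mod N)) - 1)"
  define F where "F = (\<lambda>i. \<Sum>v<i. g v)"
  have sl: "\<And>t. t < n \<Longrightarrow> s t < N" using s by (auto simp: N_def PiE_def Pi_def)
  have "card {t\<in>{..<n}. s t < N} = (\<Sum>v<N. a v)" unfolding a_def by (rule cnt_lt) simp
  moreover have "{t\<in>{..<n}. s t < N} = {..<n}" using sl by auto
  ultimately have suma: "(\<Sum>v<N. a v) = n" by simp
  have FN: "F N = -1"
  proof -
    have "F N = (\<Sum>v<N. int (a v) - 1)" unfolding F_def g_def
      by (rule sum.cong) auto
    also have "\<dots> = int (\<Sum>v<N. a v) - int N" by (simp add: sum_subtractf)
    also have "\<dots> = int n - int N" by (simp only: suma)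
    finally show ?thesis by (simp add: N_def)
  qed
  have per: "F (N+i) = F i - 1" for i
  proof -
    have "F (N+i) = F N + (\<Sum>w<i. g (w + N))" unfolding F_def by (rule sum_split)
    also have "(\<Sum>w<i. g (w + N)) = F i" unfolding F_def g_def by simp
    finally show ?thesis using FN by simp
  qed
  have "N \<ge> 1" by (simp add: N_def)
  from cycle[of N F, OF this per] obtain r where r: "r < N" "\<forall>i\<in>{1..<N}. F r \<le> F (r+i)"
    and runiq: "\<And>r'. r' < N \<Longrightarrow> \<forall>i\<in>{1..<N}. F r' \<le> F (r'+i) \<Longrightarrow> r' = r"
    by metis
  have key: "((\<lambda>t\<in>{..<n}. (s t + c) mod N + 1) \<in> pff {..<n} 0 n) \<longleftrightarrow>
      (\<forall>i\<in>{1..<N}. F ((N-c) mod N) \<le> F ((N-c) mod N + i))" if c: "c < N" for c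
  proof -
    define h where "h = (\<lambda>t\<in>{..<n}. (s t + c) mod N + 1)"
    define rc where "rc = (N-c) mod N"
    have step1: "h \<in> pff {..<n} 0 n \<longleftrightarrow> (\<forall>i\<in>{1..n}. i \<le> card {t\<in>{..<n}. h t \<le> i})"
    proof
      assume "h \<in> pff {..<n} 0 n" then show "\<forall>i\<in>{1..n}. i \<le> card {t\<in>{..<n}. h t \<le> i}"
        by (simp add: pff_def)
    next
      assume H: "\<forall>i\<in>{1..n}. i \<le> card {t\<in>{..<n}. h t \<le> i}"
      then have "n \<le> card {t\<in>{..<n}. h t \<le> n}" using n by auto
      moreover have "card {t\<in>{..<n}. h t \<le> n} \<le> n"
        using card_mono[of "{..<n}" "{t\<in>{..<n}. h t \<le> n}"] by auto
      ultimately have "card {t\<in>{..<n}. h t \<le> n} = card {..<n}" by simp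
      then have "{t\<in>{..<n}. h t \<le> n} = {..<n}"
        by (intro card_subset_eq) auto
      then have "\<forall>t<n. h t \<le> n" by blast
      then show "h \<in> pff {..<n} 0 n" using H unfolding pff_def h_def by auto
    qed
    have step2: "card {t\<in>{..<n}. h t \<le> i} = (\<Sum>w<i. a ((w + rc) mod N))" if i: "i \<in> {1..n}" for i
    proof -
      have "{t\<in>{..<n}. h t \<le> i} = {t\<in>{..<n}. (s t + c) mod N < i}"
        using i by (auto simp: h_def)
      then have "card {t\<in>{..<n}. h t \<le> i} = (\<Sum>w<i. card {t\<in>{..<n}. (s t + c) mod N = w})"
        using cnt_lt[of "{..<n}" "\<lambda>t. (s t + c) mod N" i] by simp
      also have "\<dots> = (\<Sum>w<i. a ((w + rc) mod N))"
      proof (rule sum.cong)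
        fix w assume w: "w \<in> {..<i}"
        then have wN: "w < N" using i by (auto simp: N_def)
        have e: "(w + N - c) mod N = (w + rc) mod N" unfolding rc_def
          using c by (simp add: mod_add_right_eq)
        have "{t\<in>{..<n}. (s t + c) mod N = w} = {t\<in>{..<n}. s t = (w + rc) mod N}"
          using modeq[OF _ c wN] sl e by auto
        then show "card {t\<in>{..<n}. (s t + c) mod N = w} = a ((w + rc) mod N)"
          by (simp add: a_def)
      qed simp
      finally show ?thesis .
    qed
    have step3: "int (\<Sum>w<i. a ((w + rc) mod N)) - int i = F (rc + i) - F rc" for i
    proof -
      have "F (rc + i) - F rc = (\<Sum>w<i. g (w + rc))" unfolding F_def by (simp add: sum_split)
      also have "\<dots> = int (\<Sum>w<i. a ((w + rc) mod N)) - int i"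
        by (simp add: g_def sum_subtractf)
      finally show ?thesis by simp
    qed
    have "(\<forall>i\<in>{1..n}. i \<le> card {t\<in>{..<n}. h t \<le> i}) \<longleftrightarrow> (\<forall>i\<in>{1..<N}. F rc \<le> F (rc + i))"
    proof -
      have "i \<le> card {t\<in>{..<n}. h t \<le> i} \<longleftrightarrow> F rc \<le> F (rc + i)" if i: "i \<in> {1..n}" for i
        using step2[OF i] step3[of i] by linarith
      moreover have "{1..n} = {1..<N}" by (auto simp: N_def)
      ultimately show ?thesis by (metis (no_types, lifting))
    qed
    then show ?thesis using step1 unfolding h_def rc_def by simp
  qed
  have modc: "(N - c) mod N = (if c = 0 then 0 else N - c)" if "c < N" for c
    using that by (cases "c = 0") auto
  have eq1: "((\<lambda>t\<in>{..<n}. (s t + c) mod N + 1) \<in> pff {..<n} 0 n) \<longleftrightarrow> c = (N - r) mod N"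
    if c: "c < N" for c
  proof
    assume "(\<lambda>t\<in>{..<n}. (s t + c) mod N + 1) \<in> pff {..<n} 0 n"
    then have "(N - c) mod N = r" using key[OF c] runiq[of "(N-c) mod N"] by (simp add: N_def)
    then show "c = (N - r) mod N" using c r(1) modc[of c] modc[of r] by (auto split: if_splits)
  next
    assume cr: "c = (N - r) mod N"
    have rr: "(N - c) mod N = r" unfolding cr using r(1) modc[of r] modc[of "N-r"] by (auto split: if_splits)
    show "(\<lambda>t\<in>{..<n}. (s t + c) mod N + 1) \<in> pff {..<n} 0 n"
      using key[OF c] rr r by simp
  qed
  have "{c\<in>{..<N}. (\<lambda>t\<in>{..<n}. (s t + c) mod N + 1) \<in> pff {..<n} 0 n} = {(N - r) mod N}"
    using eq1 by (auto simp: N_def)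
  then show ?thesis by (simp add: N_def)
qed



lemma card_filter_sum: "finite A \<Longrightarrow> card {x\<in>A. P x} = (\<Sum>x\<in>A. if P x then 1 else 0 :: nat)"
  by (simp add: sum.inter_filter[symmetric])

lemma Pc_formula: "Pc n = (n+1)^(n-1)"
proof (cases "n = 0")
  case True
  have "pff {..<0} 0 0 = {\<lambda>_. undefined}" by (auto simp: pff_def)
  then show ?thesis using True by (simp add: Pc_def)
next
  case False
  then have n: "n \<ge> 1" by simp
  define N where "N = Suc n"
  define S where "S = {..<n} \<rightarrow>\<^sub>E {..n}"
  define sh where "sh = (\<lambda>c s. \<lambda>t\<in>{..<n}. (s t + c) mod N + (1::nat))"
  define PP where "PP = pff {..<n} 0 n"
  have finS: "finite S" unfolding S_def by (simp add: finite_PiE)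
  have cardS: "card S = N^n" unfolding S_def N_def by (simp add: card_PiE)
  have bij: "card {s\<in>S. sh c s \<in> PP} = card PP" if c: "c < N" for c
  proof -
    define iv where "iv = (\<lambda>g. \<lambda>t\<in>{..<n}. (g t - 1 + N - c) mod N)"
    have "bij_betw (sh c) {s\<in>S. sh c s \<in> PP} PP"
    proof (rule bij_betwI)
      show "sh c \<in> {s\<in>S. sh c s \<in> PP} \<rightarrow> PP" by auto
      have shiv: "sh c (iv g) = g" if g: "g \<in> PP" for g
      proof
        fix t show "sh c (iv g) t = g t"
        proof (cases "t < n")
          case True
          have gt: "g t \<ge> 1" "g t \<le> n" using g True by (auto simp: PP_def pff_def)
          have "((g t - 1 + N - c) mod N + c) mod N = g t - 1"
            using modeq[of "(g t - 1 + N - c) mod N" N c "g t - 1"] gt c by (simp add: N_def)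
          then show ?thesis using True gt by (simp add: sh_def iv_def)
        next
          case False then show ?thesis using g by (auto simp: sh_def PP_def pff_def PiE_def extensional_def)
        qed
      qed
      show "iv \<in> PP \<rightarrow> {s\<in>S. sh c s \<in> PP}"
      proof
        fix g assume g: "g \<in> PP"
        have "iv g \<in> S" unfolding S_def iv_def N_def
          by (auto simp: PiE_def Pi_def less_Suc_eq_le[symmetric])
        then show "iv g \<in> {s\<in>S. sh c s \<in> PP}" using shiv[OF g] g by simp
      qed
      show "iv (sh c s) = s" if s: "s \<in> {s\<in>S. sh c s \<in> PP}" for s
      proof
        fix t show "iv (sh c s) t = s t"
        proof (cases "t < n")
          case True
          have "s t < N" using s True by (auto simp: S_def N_def PiE_def Pi_def)
          then have "s t = ((s t + c) mod N + N - c) mod N"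
            using modeq[of "s t" N c "(s t + c) mod N"] c by simp
          then show ?thesis using True by (simp add: sh_def iv_def)
        next
          case False then show ?thesis using s by (auto simp: iv_def S_def PiE_def extensional_def)
        qed
      qed
      show "sh c (iv g) = g" if "g \<in> PP" for g using shiv that .
    qed
    then show ?thesis by (rule bij_betw_same_card)
  qed
  have one: "card {c\<in>{..<N}. sh c s \<in> PP} = 1" if "s \<in> S" for s
    using shift_unique[OF n, of s] that by (simp add: S_def sh_def PP_def N_def)
  have "N^n = (\<Sum>s\<in>S. card {c\<in>{..<N}. sh c s \<in> PP})" using one cardS by simp
  also have "\<dots> = (\<Sum>s\<in>S. \<Sum>c<N. if sh c s \<in> PP then 1 else 0)"
    by (rule sum.cong[OF refl], rule card_filter_sum) simp
  also have "\<dots> = (\<Sum>c<N. \<Sum>s\<in>S. if sh c s \<in> PP then 1 else 0)"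
    by (rule sum.swap)
  also have "\<dots> = (\<Sum>c<N. card {s\<in>S. sh c s \<in> PP})"
    by (rule sum.cong[OF refl], rule card_filter_sum[symmetric]) (rule finS)
  also have "\<dots> = (\<Sum>c<N. card PP)" using bij by simp
  finally have "N * N^(n-1) = N * card PP" using n by (simp add: power_eq_if)
  then have "N^(n-1) = card PP" using mult_left_cancel[of N] by (simp add: N_def)
  then show ?thesis by (simp add: Pc_def PP_def N_def)
qed



lemma PF_bij: "bij_betw (\<lambda>p. restrict (nth p) {..<n}) (PF n) (pff {..<n} 0 n)"
proof (rule bij_betwI[where g = "\<lambda>g. map g [0..<n]"])
  show "(\<lambda>p. restrict (nth p) {..<n}) \<in> PF n \<rightarrow> pff {..<n} 0 n"
  proof
    fix p assume p: "p \<in> PF n"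
    have "{t\<in>{..<n}. restrict (nth p) {..<n} t \<le> 0 + i} = {t. t<n \<and> p!t \<le> i}" for i by auto
    then show "restrict (nth p) {..<n} \<in> pff {..<n} 0 n" using p
      by (auto simp: PF_def pff_def restrict_PiE_iff)
  qed
  show "(\<lambda>g. map g [0..<n]) \<in> pff {..<n} 0 n \<rightarrow> PF n"
  proof
    fix g assume g: "g \<in> pff {..<n} 0 n"
    have "{t. t < n \<and> map g [0..<n] ! t \<le> i} = {t\<in>{..<n}. g t \<le> 0 + i}" for i by auto
    then show "map g [0..<n] \<in> PF n" using g by (auto simp: PF_def pff_def PiE_def Pi_def)
  qed
  show "map (restrict (nth p) {..<n}) [0..<n] = p" if "p \<in> PF n" for p
    using that by (auto simp: PF_def intro!: nth_equalityI)
  show "restrict (nth (map g [0..<n])) {..<n} = g" if "g \<in> pff {..<n} 0 n" for g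
    using that by (auto simp: pff_def PiE_def extensional_def)
qed

lemma card_PF: "card (PF n) = (n+1)^(n-1)"
  using bij_betw_same_card[OF PF_bij] Pc_formula by (simp add: Pc_def)

lemma card_PF_first:
  assumes "n \<ge> 1"
  shows "card {p\<in>PF n. p!0 = k} = card {g\<in>pff {..<n} 0 n. g 0 = k}"
proof -
  have "card {p\<in>PF n. restrict (nth p) {..<n} 0 = k} = card {g\<in>pff {..<n} 0 n. g 0 = k}"
    by (rule card_bij_filter[OF PF_bij])
  then show ?thesis using assms by simp
qed

definition Aset :: "nat \<Rightarrow> nat \<Rightarrow> (nat \<Rightarrow> nat) set" where
  "Aset n k = {h. h \<in> {1..<n} \<rightarrow>\<^sub>E {1..n} \<and>
      (\<forall>i\<in>{1..n}. i \<le> card {t\<in>{1..<n}. h t \<le> i} + (if k \<le> i then 1 else 0))}"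

definition Dset :: "nat \<Rightarrow> nat \<Rightarrow> (nat \<Rightarrow> nat) set" where
  "Dset n k = {h\<in>Aset n k. card {t\<in>{1..<n}. h t \<le> k} = k - 1}"

lemma card_split0:
  assumes "(n::nat) \<ge> 1"
  shows "card {t\<in>{..<n}. P t} = card {t\<in>{1..<n}. P t} + (if P 0 then 1 else 0)"
proof (cases "P 0")
  case True
  have "{t\<in>{..<n}. P t} = insert 0 {t\<in>{1..<n}. P t}"
  proof (rule set_eqI)
    fix x show "x \<in> {t\<in>{..<n}. P t} \<longleftrightarrow> x \<in> insert 0 {t\<in>{1..<n}. P t}"
      using assms True by (cases "x = 0") auto
  qed
  moreover have "finite {t\<in>{1..<n}. P t}" "0 \<notin> {t\<in>{1..<n}. P t}" by auto
  ultimately show ?thesis using True by (simp only: card_insert_disjoint) simp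
next
  case False
  have "{t\<in>{..<n}. P t} = {t\<in>{1..<n}. P t}"
  proof (rule set_eqI)
    fix x show "x \<in> {t\<in>{..<n}. P t} \<longleftrightarrow> x \<in> {t\<in>{1..<n}. P t}"
      using assms False by (cases "x = 0") auto
  qed
  then show ?thesis using False by simp
qed

lemma first_A:
  assumes k: "1 \<le> k" "k \<le> n"
  shows "card {g\<in>pff {..<n} 0 n. g 0 = k} = card (Aset n k)"
proof -
  have n: "n \<ge> 1" using k by simp
  have cnt: "card {t\<in>{..<n}. g t \<le> i} = card {t\<in>{1..<n}. g t \<le> i} + (if k \<le> i then 1 else 0)"
    if "g 0 = k" for g :: "nat \<Rightarrow> nat" and i
    using card_split0[OF n, of "\<lambda>t. g t \<le> i"] that by simp
  have "bij_betw (\<lambda>g. restrict g {1..<n}) {g\<in>pff {..<n} 0 n. g 0 = k} (Aset n k)"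
  proof (rule bij_betwI[where g = "\<lambda>h. h(0 := k)"])
    show "(\<lambda>g. restrict g {1..<n}) \<in> {g\<in>pff {..<n} 0 n. g 0 = k} \<rightarrow> Aset n k"
    proof
      fix g assume g: "g \<in> {g\<in>pff {..<n} 0 n. g 0 = k}"
      have "{t\<in>{1..<n}. restrict g {1..<n} t \<le> i} = {t\<in>{1..<n}. g t \<le> i}" for i by auto
      then show "restrict g {1..<n} \<in> Aset n k" using g cnt[of g]
        by (auto simp: Aset_def pff_def PiE_def Pi_def)
    qed
    show "(\<lambda>h. h(0 := k)) \<in> Aset n k \<rightarrow> {g\<in>pff {..<n} 0 n. g 0 = k}"
    proof
      fix h assume h: "h \<in> Aset n k"
      have "{t\<in>{1..<n}. (h(0:=k)) t \<le> i} = {t\<in>{1..<n}. h t \<le> i}" for i by auto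
      then show "h(0 := k) \<in> {g\<in>pff {..<n} 0 n. g 0 = k}" using h k cnt[of "h(0:=k)"]
        by (auto simp: Aset_def pff_def PiE_def Pi_def extensional_def)
    qed
    show "(restrict g {1..<n})(0 := k) = g" if "g \<in> {g\<in>pff {..<n} 0 n. g 0 = k}" for g
    proof
      fix t show "((restrict g {1..<n})(0 := k)) t = g t"
        using that by (cases "t = 0") (auto simp: pff_def PiE_def extensional_def)
    qed
    show "restrict (h(0 := k)) {1..<n} = h" if "h \<in> Aset n k" for h
    proof
      fix t show "restrict (h(0 := k)) {1..<n} t = h t"
        using that by (auto simp: Aset_def PiE_def extensional_def)
    qed
  qed
  then show ?thesis by (rule bij_betw_same_card)
qed

lemma A_empty: "n \<ge> 1 \<Longrightarrow> Aset n (Suc n) = {}"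
proof (rule ccontr)
  assume n: "n \<ge> 1" and "Aset n (Suc n) \<noteq> {}"
  then obtain h where h: "h \<in> Aset n (Suc n)" by auto
  then have "n \<le> card {t\<in>{1..<n}. h t \<le> n}" using n by (auto simp: Aset_def)
  moreover have "card {t\<in>{1..<n}. h t \<le> n} \<le> card {1..<n}" by (rule card_mono) auto
  ultimately show False using n by simp
qed

lemma A_step:
  assumes k: "1 \<le> k" "k \<le> n"
  shows "card (Aset n k) = card (Aset n (Suc k)) + card (Dset n k)"
proof -
  have fin: "finite (Aset n k)"
    by (rule finite_subset[of _ "{1..<n} \<rightarrow>\<^sub>E {1..n}"]) (auto simp: Aset_def finite_PiE)
  have eq: "Aset n k = Aset n (Suc k) \<union> Dset n k"
  proof (rule set_eqI, rule iffI)
    fix h assume h: "h \<in> Aset n k"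
    show "h \<in> Aset n (Suc k) \<union> Dset n k"
    proof (cases "card {t\<in>{1..<n}. h t \<le> k} = k - 1")
      case True then show ?thesis using h by (simp add: Dset_def)
    next
      case False
      have "\<forall>i\<in>{1..n}. i \<le> card {t\<in>{1..<n}. h t \<le> i} + (if Suc k \<le> i then 1 else 0)"
      proof
        fix i assume i: "i \<in> {1..n}"
        have hi: "i \<le> card {t\<in>{1..<n}. h t \<le> i} + (if k \<le> i then 1 else 0)"
          using h i by (auto simp: Aset_def)
        show "i \<le> card {t\<in>{1..<n}. h t \<le> i} + (if Suc k \<le> i then 1 else 0)"
          using hi False by (cases "i = k") (auto split: if_splits)
      qed
      then show ?thesis using h by (auto simp: Aset_def)
    qed
  next
    fix h assume h: "h \<in> Aset n (Suc k) \<union> Dset n k"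
    show "h \<in> Aset n k"
    proof (cases "h \<in> Dset n k")
      case True then show ?thesis by (simp add: Dset_def)
    next
      case False
      then have h: "h \<in> Aset n (Suc k)" using h by simp
      show ?thesis using h unfolding Aset_def
      proof (safe, goal_cases)
        case (1 i)
        have "i \<le> card {t\<in>{1..<n}. h t \<le> i} + (if Suc k \<le> i then 1 else 0)" using 1 h by (auto simp: Aset_def)
        then show ?case by (auto split: if_splits)
      qed
    qed
  qed
  have disj: "Aset n (Suc k) \<inter> Dset n k = {}"
  proof (rule ccontr)
    assume "Aset n (Suc k) \<inter> Dset n k \<noteq> {}"
    then obtain h where h: "h \<in> Aset n (Suc k)" "h \<in> Dset n k" by auto
    have "\<forall>i\<in>{1..n}. i \<le> card {t\<in>{1..<n}. h t \<le> i} + (if Suc k \<le> i then 1 else 0)"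
      using h(1) by (simp add: Aset_def)
    then have "k \<le> card {t\<in>{1..<n}. h t \<le> k} + (if Suc k \<le> k then 1 else 0)"
      by (rule bspec) (use k in auto)
    then have "k \<le> card {t\<in>{1..<n}. h t \<le> k}" by simp
    then show False using h(2) k by (simp add: Dset_def)
  qed
  have "card (Aset n (Suc k) \<union> Dset n k) = card (Aset n (Suc k)) + card (Dset n k)"
    by (rule card_Un_disjoint) (use fin eq disj in \<open>auto intro: finite_subset\<close>)
  then show ?thesis using eq by simp
qed

lemma A_sum:
  assumes "1 \<le> k" "k \<le> Suc n" "n \<ge> 1"
  shows "card (Aset n k) = (\<Sum>k'\<in>{k..n}. card (Dset n k'))"
  using assms
proof (induction "Suc n - k" arbitrary: k)
  case 0
  then have "k = Suc n" by simp
  then show ?case using A_empty[OF 0(4)] by simp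
next
  case (Suc d)
  then have k: "k \<le> n" by simp
  have "card (Aset n k) = card (Aset n (Suc k)) + card (Dset n k)" using A_step Suc k by simp
  also have "card (Aset n (Suc k)) = (\<Sum>k'\<in>{Suc k..n}. card (Dset n k'))"
    using Suc k by simp
  finally show ?case using k by (simp add: sum.atLeast_Suc_atMost)
qed



lemma card_split_T:
  assumes "finite J" "T \<subseteq> J"
  shows "card {t\<in>J. P t} = card {t\<in>T. P t} + card {t\<in>J-T. P t}"
proof -
  have "{t\<in>J. P t} = {t\<in>T. P t} \<union> {t\<in>J-T. P t}" using assms by auto
  moreover have "card ({t\<in>T. P t} \<union> {t\<in>J-T. P t}) = card {t\<in>T. P t} + card {t\<in>J-T. P t}"
    by (rule card_Un_disjoint) (use assms in \<open>auto intro: finite_subset\<close>)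
  ultimately show ?thesis by simp
qed

lemma finite_pff: "finite I \<Longrightarrow> finite (pff I off m)"
  by (rule finite_subset[of _ "I \<rightarrow>\<^sub>E {off+1..off+m}"]) (auto simp: pff_def finite_PiE)

lemma D_card:
  assumes k: "1 \<le> k" "k \<le> n"
  shows "card (Dset n k) = (n-1 choose (k-1)) * (Pc (k-1) * Pc (n-k))"
proof -
  define J where "J = {1..<n}"
  have finJ: "finite J" and cJ: "card J = n - 1" by (simp_all add: J_def)
  define Sg where "Sg = Sigma {T. T \<subseteq> J \<and> card T = k-1} (\<lambda>T. pff T 0 (k-1) \<times> pff (J-T) k (n-k))"
  define \<Phi> where "\<Phi> = (\<lambda>h::nat\<Rightarrow>nat. ({t\<in>J. h t \<le> k-1}, restrict h {t\<in>J. h t \<le> k-1},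
                        restrict h (J - {t\<in>J. h t \<le> k-1})))"
  define \<Psi> where "\<Psi> = (\<lambda>(T::nat set, x::nat\<Rightarrow>nat, y::nat\<Rightarrow>nat). \<lambda>t. if t\<in>T then x t else y t)"
  have D_iff: "h \<in> Dset n k \<longleftrightarrow> h \<in> J \<rightarrow>\<^sub>E {1..n} \<and>
      (\<forall>i\<in>{1..n}. i \<le> card {t\<in>J. h t \<le> i} + (if k \<le> i then 1 else 0)) \<and>
      card {t\<in>J. h t \<le> k} = k - 1" for h
    by (simp add: Dset_def Aset_def J_def)
  have "bij_betw \<Phi> (Dset n k) Sg"
  proof (rule bij_betwI[where g=\<Psi>])
    show "\<Phi> \<in> Dset n k \<rightarrow> Sg"
    proof
      fix h assume h: "h \<in> Dset n k"
      define T where "T = {t\<in>J. h t \<le> k-1}"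
      have hJ: "h \<in> J \<rightarrow>\<^sub>E {1..n}"
        and hc: "\<forall>i\<in>{1..n}. i \<le> card {t\<in>J. h t \<le> i} + (if k \<le> i then 1 else 0)"
        and hk: "card {t\<in>J. h t \<le> k} = k - 1" using h D_iff by auto
      have TJ: "T \<subseteq> J" "finite T" using finJ by (auto simp: T_def intro: finite_subset)
      have TK0: "T \<subseteq> {t\<in>J. h t \<le> k}" by (auto simp: T_def)
      then have c1: "card T \<le> k-1" using hk card_mono[OF _ TK0] finJ by simp
      have c2: "k - 1 \<le> card T"
      proof (cases "k = 1")
        case False
        then have "k - 1 \<in> {1..n}" using k by auto
        then have "k - 1 \<le> card {t\<in>J. h t \<le> k-1} + (if k \<le> k - 1 then 1 else 0)" using hc by blast
        moreover have "\<not> k \<le> k - 1" using k by simp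
        ultimately show ?thesis by (simp add: T_def)
      qed simp
      have cT: "card T = k - 1" using c1 c2 by simp
      have TK: "T = {t\<in>J. h t \<le> k}"
        by (rule card_subset_eq) (use finJ TK0 cT hk in auto)
      have hv: "\<And>t. t \<in> J \<Longrightarrow> 1 \<le> h t \<and> h t \<le> n" using hJ by (auto simp: PiE_def Pi_def)
      have ygt: "\<And>t. t \<in> J - T \<Longrightarrow> k+1 \<le> h t \<and> h t \<le> n"
      proof -
        fix t assume t: "t \<in> J - T"
        then have "\<not> h t \<le> k" using TK by auto
        then show "k+1 \<le> h t \<and> h t \<le> n" using hv t by auto
      qed
      have x: "restrict h T \<in> pff T 0 (k-1)"
      proof -
        have "i \<le> card {t\<in>T. restrict h T t \<le> 0 + i}" if i: "i \<in> {1..k-1}" for i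
        proof -
          have "{t\<in>T. restrict h T t \<le> 0 + i} = {t\<in>J. h t \<le> i}" using i by (auto simp: T_def)
          moreover have "i \<in> {1..n}" "\<not> k \<le> i" using i k by auto
          ultimately show ?thesis using hc by fastforce
        qed
        moreover have "restrict h T \<in> T \<rightarrow>\<^sub>E {0+1..0+(k-1)}" using hv TJ by (auto simp: T_def)
        ultimately show ?thesis by (simp add: pff_def)
      qed
      have y: "restrict h (J-T) \<in> pff (J-T) k (n-k)"
      proof -
        have "i \<le> card {t\<in>J-T. restrict h (J-T) t \<le> k + i}" if i: "i \<in> {1..n-k}" for i
        proof -
          have e1: "{t\<in>J-T. restrict h (J-T) t \<le> k + i} = {t\<in>J-T. h t \<le> k + i}" by auto
          have e2: "{t\<in>T. h t \<le> k + i} = T" by (auto simp: T_def)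
          have "card {t\<in>J. h t \<le> k+i} = card T + card {t\<in>J-T. h t \<le> k + i}"
            using card_split_T[OF finJ TJ(1), of "\<lambda>t. h t \<le> k+i"] e2 by simp
          moreover have "k + i \<in> {1..n}" "k \<le> k + i" using i k by auto
          ultimately have "k + i \<le> card T + card {t\<in>J-T. h t \<le> k + i} + 1" using hc by fastforce
          then show ?thesis using e1 cT k by simp
        qed
        moreover have "restrict h (J-T) \<in> (J-T) \<rightarrow>\<^sub>E {k+1..k+(n-k)}" using ygt k by auto
        ultimately show ?thesis by (simp add: pff_def)
      qed
      have "\<Phi> h = (T, restrict h T, restrict h (J-T))" by (simp add: \<Phi>_def T_def)
      then show "\<Phi> h \<in> Sg" using x y cT TJ by (simp add: Sg_def)
    qed
    show "\<Psi> \<in> Sg \<rightarrow> Dset n k"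
    proof
      fix z assume z: "z \<in> Sg"
      obtain T x y where zz: "z = (T,x,y)" by (cases z)
      with z have T: "T \<subseteq> J" "card T = k-1" and x: "x \<in> pff T 0 (k-1)"
        and y: "y \<in> pff (J-T) k (n-k)" by (auto simp: Sg_def)
      define h where "h = (\<lambda>t. if t\<in>T then x t else y t)"
      have \<Psi>z: "\<Psi> z = h" by (simp add: zz \<Psi>_def h_def)
      have xv: "\<And>t. t\<in>T \<Longrightarrow> 1 \<le> x t \<and> x t \<le> k-1" using x by (auto simp: pff_def PiE_def Pi_def)
      have yv: "\<And>t. t\<in>J-T \<Longrightarrow> k+1 \<le> y t \<and> y t \<le> n" using y k by (auto simp: pff_def PiE_def Pi_def)
      have ye: "\<And>t. t\<notin>J-T \<Longrightarrow> y t = undefined" using y by (auto simp: pff_def PiE_def extensional_def)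
      have xc: "\<And>i. i\<in>{1..k-1} \<Longrightarrow> i \<le> card {t\<in>T. x t \<le> i}" using x by (auto simp: pff_def)
      have yc: "\<And>i. i\<in>{1..n-k} \<Longrightarrow> i \<le> card {t\<in>J-T. y t \<le> k+i}" using y by (auto simp: pff_def)
      have split: "card {t\<in>J. h t \<le> i} = card {t\<in>T. x t \<le> i} + card {t\<in>J-T. y t \<le> i}" for i
      proof -
        have "{t\<in>T. h t \<le> i} = {t\<in>T. x t \<le> i}" "{t\<in>J-T. h t \<le> i} = {t\<in>J-T. y t \<le> i}"
          by (auto simp: h_def)
        then show ?thesis using card_split_T[OF finJ T(1), of "\<lambda>t. h t \<le> i"] by simp
      qed
      have lowall: "card {t\<in>T. x t \<le> i} = k - 1" if "k - 1 \<le> i" for i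
      proof -
        have "{t\<in>T. x t \<le> i} = T" using xv that by force
        then show ?thesis using T by simp
      qed
      have ynone: "card {t\<in>J-T. y t \<le> i} = 0" if "i \<le> k" for i
      proof -
        have "{t\<in>J-T. y t \<le> i} = {}" using yv that by force
        then show ?thesis by (simp only: card.empty)
      qed
      have hJ: "h \<in> J \<rightarrow>\<^sub>E {1..n}"
      proof -
        have "h t \<in> {1..n}" if "t \<in> J" for t
          using xv[of t] yv[of t] that k by (cases "t \<in> T") (auto simp: h_def)
        moreover have "h t = undefined" if "t \<notin> J" for t using that T ye by (auto simp: h_def)
        ultimately show ?thesis by (auto simp: PiE_def extensional_def)
      qed
      have cond: "\<forall>i\<in>{1..n}. i \<le> card {t\<in>J. h t \<le> i} + (if k \<le> i then 1 else 0)"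
      proof
        fix i assume i: "i \<in> {1..n}"
        show "i \<le> card {t\<in>J. h t \<le> i} + (if k \<le> i then 1 else 0)"
        proof (cases "i < k")
          case True
          then have "i \<le> card {t\<in>T. x t \<le> i}" using xc i by auto
          then show ?thesis using split[of i] by simp
        next
          case False
          then have "k - 1 \<le> i" by simp
          note l = lowall[OF this]
          show ?thesis
          proof (cases "i = k")
            case True then show ?thesis using split[of i] l ynone[of i] k by simp
          next
            case False
            then have "i - k \<in> {1..n-k}" using \<open>\<not> i < k\<close> i by auto
            then have "i - k \<le> card {t\<in>J-T. y t \<le> k + (i - k)}" by (rule yc)
            then have "i - k \<le> card {t\<in>J-T. y t \<le> i}" using \<open>\<not> i < k\<close> by simp
            then show ?thesis using split[of i] l \<open>\<not> i < k\<close> k by simp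
          qed
        qed
      qed
      have "card {t\<in>J. h t \<le> k} = k - 1" using split[of k] lowall[of k] ynone[of k] by simp
      then show "\<Psi> z \<in> Dset n k" using hJ cond \<Psi>z D_iff by simp
    qed
    show "\<Psi> (\<Phi> h) = h" if h: "h \<in> Dset n k" for h
    proof
      fix t
      have "h t = undefined" if "t \<notin> J" using h that D_iff by (auto simp: PiE_def extensional_def)
      then show "\<Psi> (\<Phi> h) t = h t" by (auto simp: \<Phi>_def \<Psi>_def)
    qed
    show "\<Phi> (\<Psi> z) = z" if z: "z \<in> Sg" for z
    proof -
      obtain T x y where zz: "z = (T,x,y)" by (cases z)
      with z have T: "T \<subseteq> J" and x: "x \<in> pff T 0 (k-1)"
        and y: "y \<in> pff (J-T) k (n-k)" by (auto simp: Sg_def)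
      have xv: "\<And>t. t\<in>T \<Longrightarrow> 1 \<le> x t \<and> x t \<le> k-1" using x by (auto simp: pff_def PiE_def Pi_def)
      have yv: "\<And>t. t\<in>J-T \<Longrightarrow> k+1 \<le> y t \<and> y t \<le> n" using y k by (auto simp: pff_def PiE_def Pi_def)
      have xe: "\<And>t. t\<notin>T \<Longrightarrow> x t = undefined" using x by (auto simp: pff_def PiE_def extensional_def)
      have ye: "\<And>t. t\<notin>J-T \<Longrightarrow> y t = undefined" using y by (auto simp: pff_def PiE_def extensional_def)
      define h where "h = (\<lambda>t. if t\<in>T then x t else y t)"
      have \<Psi>z: "\<Psi> z = h" by (simp add: zz \<Psi>_def h_def)
      have hT: "{t\<in>J. h t \<le> k-1} = T"
      proof (rule set_eqI)
        fix t show "t \<in> {t\<in>J. h t \<le> k-1} \<longleftrightarrow> t \<in> T"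
          using xv[of t] yv[of t] T by (cases "t \<in> T") (auto simp: h_def)
      qed
      have r1: "restrict h T = x"
      proof
        fix t show "restrict h T t = x t" using xe by (auto simp: h_def)
      qed
      have r2: "restrict h (J - T) = y"
      proof
        fix t show "restrict h (J-T) t = y t" using ye by (auto simp: h_def)
      qed
      have "\<Phi> h = (T, x, y)" unfolding \<Phi>_def hT r1 r2 ..
      then show ?thesis using \<Psi>z zz by simp
    qed
  qed
  then have "card (Dset n k) = card Sg" by (rule bij_betw_same_card)
  also have "card Sg = (\<Sum>T\<in>{T. T \<subseteq> J \<and> card T = k-1}. card (pff T 0 (k-1) \<times> pff (J-T) k (n-k)))"
    unfolding Sg_def
    by (rule card_SigmaI) (use finJ in \<open>auto intro: finite_pff finite_subset\<close>)
  also have "\<dots> = (\<Sum>T\<in>{T. T \<subseteq> J \<and> card T = k-1}. Pc (k-1) * Pc (n-k))"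
  proof (rule sum.cong[OF refl])
    fix T assume T: "T \<in> {T. T \<subseteq> J \<and> card T = k-1}"
    then have fT: "finite T" using finJ by (auto intro: finite_subset)
    have "card (J - T) = n - k" using T fT finJ cJ k by (simp add: card_Diff_subset)
    then show "card (pff T 0 (k-1) \<times> pff (J-T) k (n-k)) = Pc (k-1) * Pc (n-k)"
      using T fT finJ by (simp add: card_cartesian_product pff_reindex)
  qed
  also have "\<dots> = (n-1 choose (k-1)) * (Pc (k-1) * Pc (n-k))"
    using n_subsets[OF finJ, of "k-1"] cJ by simp
  finally show ?thesis .
qed



lemma binom_lim:
  "((\<lambda>n. real (n-1 choose k) * fact k / real n ^ k) \<longlongrightarrow> 1) at_top"
proof -
  have "((\<lambda>n. \<Prod>i\<in>{0..<k}. (real n - 1 - real i) / real n) \<longlongrightarrow> (\<Prod>i\<in>{0..<k}. 1)) at_top"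
    by (intro tendsto_prod) real_asymp
  moreover have "eventually (\<lambda>n. (\<Prod>i\<in>{0..<k}. (real n - 1 - real i) / real n) =
      real (n-1 choose k) * fact k / real n ^ k) at_top"
    using eventually_ge_at_top[of 1]
  proof eventually_elim
    case (elim n)
    have "real (n-1 choose k) * fact k = (\<Prod>i = 0..<k. real (n-1) - of_nat i)"
      by (simp add: binomial_gbinomial gbinomial_mult_fact')
    also have "\<dots> = (\<Prod>i = 0..<k. real n - 1 - real i)" using elim by (simp add: of_nat_diff)
    finally show ?case by (simp add: prod_dividef)
  qed
  ultimately show ?thesis by (simp add: tendsto_cong)
qed

lemma term_lim:
  assumes m: "m \<ge> 1"
  shows "((\<lambda>n. real n * real (n-1 choose (m-1)) * real ((n-m+1)^(n-m-1)) * real (m^(m-2))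
           / real ((n+1)^(n-1))) \<longlongrightarrow> borel_pmf m) at_top"
proof -
  define c where "c = real (m^(m-2)) / fact (m-1)"
  have e: "((\<lambda>n::nat. real n ^ m * (real n - m + 1) powr (real n - m - 1) / (real n+1) powr (real n - 1))
      \<longlongrightarrow> inverse (exp m)) at_top"
    by real_asymp
  have l: "((\<lambda>n. (real (n-1 choose (m-1)) * fact (m-1) / real n ^ (m-1)) *
         (real n ^ m * (real n - m + 1) powr (real n - m - 1) / (real n+1) powr (real n - 1)) * c)
         \<longlongrightarrow> 1 * inverse (exp m) * c) at_top"
    by (intro tendsto_mult binom_lim e tendsto_const)
  have lim_eq: "1 * inverse (exp m) * c = borel_pmf m"
  proof (cases "m = 1")
    case True thus ?thesis by (simp add: c_def borel_pmf_def exp_minus)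
  next
    case False
    then have "m \<ge> 2" using m by auto
    then obtain k where k: "m = Suc (Suc k)" by (metis add_2_eq_Suc le_Suc_ex)
    have f: "(fact (Suc (Suc k)) :: real) = real (Suc (Suc k)) * fact (Suc k)"
      by (simp only: fact_Suc)
    have "real (Suc (Suc k)) ^ (Suc (Suc k) - 1) / fact (Suc (Suc k)) =
          real (Suc (Suc k)) ^ k / fact (Suc k)"
      unfolding f by simp
    then show ?thesis unfolding k c_def borel_pmf_def exp_minus by simp
  qed
  have ev: "eventually (\<lambda>n. (real (n-1 choose (m-1)) * fact (m-1) / real n ^ (m-1)) *
         (real n ^ m * (real n - m + 1) powr (real n - m - 1) / (real n+1) powr (real n - 1)) * c =
       real n * real (n-1 choose (m-1)) * real ((n-m+1)^(n-m-1)) * real (m^(m-2))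
           / real ((n+1)^(n-1))) at_top"
    using eventually_ge_at_top[of "m+1"]
  proof eventually_elim
    case (elim n)
    have p1: "(real n - m + 1) powr (real n - m - 1) = real ((n-m+1)^(n-m-1))"
    proof -
      have "(real n - m + 1) powr (real n - m - 1) = real (n-m+1) powr real (n-m-1)"
        using elim by (simp add: of_nat_diff algebra_simps)
      also have "\<dots> = real ((n-m+1)^(n-m-1))" by (simp add: powr_realpow)
      finally show ?thesis .
    qed
    have p2: "(real n + 1) powr (real n - 1) = real ((n+1)^(n-1))"
    proof -
      have "(real n + 1) powr (real n - 1) = real (n+1) powr real (n-1)"
        using elim by (simp add: of_nat_diff algebra_simps)
      also have "\<dots> = real ((n+1)^(n-1))" by (simp add: powr_realpow)
      finally show ?thesis .
    qed
    obtain k where k: "m = Suc k" using m by (cases m) auto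
    have p3: "real n ^ m = real n * real n ^ (m-1)" unfolding k by simp
    have "real n > 0" using elim by auto
    then show ?case unfolding p1 p2 p3 c_def by (simp add: field_simps)
  qed
  show ?thesis using tendsto_cong[OF ev] l lim_eq by simp
qed



lemma count_formula:
  assumes jn: "j + 1 \<le> n"
  shows "card {p\<in>PF n. p!0 = n-j} = (\<Sum>m\<in>{1..j+1}. (n-1 choose (m-1)) * ((n-m+1)^(n-m-1) * m^(m-2)))"
proof -
  have n: "n \<ge> 1" using jn by simp
  have "card {p\<in>PF n. p!0 = n-j} = card {g\<in>pff {..<n} 0 n. g 0 = n-j}" by (rule card_PF_first[OF n])
  also have "\<dots> = card (Aset n (n-j))" by (rule first_A) (use jn in auto)
  also have "\<dots> = (\<Sum>k'\<in>{n-j..n}. card (Dset n k'))" by (rule A_sum) (use jn in auto)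
  also have "\<dots> = (\<Sum>k'\<in>{n-j..n}. (n-1 choose (k'-1)) * (Pc (k'-1) * Pc (n-k')))"
    by (rule sum.cong[OF refl], rule D_card) (use jn in auto)
  also have "\<dots> = (\<Sum>m\<in>{1..j+1}. (n-1 choose (m-1)) * ((n-m+1)^(n-m-1) * m^(m-2)))"
  proof (rule sum.reindex_bij_witness[where i = "\<lambda>m. n+1-m" and j = "\<lambda>k. n+1-k"])
    fix k' assume k': "k' \<in> {n-j..n}"
    show "n + 1 - (n + 1 - k') = k'" using k' by auto
    show "n + 1 - k' \<in> {1..j+1}" using k' jn by auto
    define m where "m = n + 1 - k'"
    have m: "m - 1 = n - k'" "n - m + 1 = k'" "n - m - 1 = k' - 2" "n - k' + 1 = m" "n - k' - 1 = m - 2"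
      using k' jn by (auto simp: m_def)
    have le: "n - k' \<le> n - 1" "n - 1 - (n - k') = k' - 1" using k' jn by auto
    have b: "(n-1 choose (m-1)) = (n-1 choose (k'-1))"
      using binomial_symmetric[OF le(1)] unfolding m(1) le(2) by simp
    show "(n-1 choose (m-1)) * ((n-m+1)^(n-m-1) * m^(m-2)) = (n-1 choose (k'-1)) * (Pc (k'-1) * Pc (n-k'))"
      unfolding b Pc_formula using k' m by (simp add: mult.commute numeral_2_eq_2)
  next
    fix m assume m: "m \<in> {1..j+1}"
    show "n + 1 - (n + 1 - m) = m" "n + 1 - m \<in> {n-j..n}" using m jn by auto
  qed
  finally show ?thesis .
qed

lemma main_lim: "((\<lambda>n. real n * prob_first n (n-j)) \<longlongrightarrow> borel_cdf (j+1)) at_top"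
proof -
  have "((\<lambda>n. \<Sum>m\<in>{1..j+1}. real n * real (n-1 choose (m-1)) * real ((n-m+1)^(n-m-1)) * real (m^(m-2))
           / real ((n+1)^(n-1))) \<longlongrightarrow> (\<Sum>m\<in>{1..j+1}. borel_pmf m)) at_top"
    by (intro tendsto_sum term_lim) auto
  moreover have "eventually (\<lambda>n. (\<Sum>m\<in>{1..j+1}. real n * real (n-1 choose (m-1)) * real ((n-m+1)^(n-m-1)) * real (m^(m-2))
           / real ((n+1)^(n-1))) = real n * prob_first n (n-j)) at_top"
    using eventually_ge_at_top[of "j+1"]
  proof eventually_elim
    case (elim n)
    have "real n * prob_first n (n-j) = real n * real (\<Sum>m\<in>{1..j+1}. (n-1 choose (m-1)) * ((n-m+1)^(n-m-1) * m^(m-2)))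
        / real ((n+1)^(n-1))"
      unfolding prob_first_def count_formula[OF elim] card_PF by simp
    also have "\<dots> = (\<Sum>m\<in>{1..j+1}. real n * real ((n-1 choose (m-1)) * ((n-m+1)^(n-m-1) * m^(m-2)))
           / real ((n+1)^(n-1)))"
      by (simp only: of_nat_sum sum_distrib_left sum_divide_distrib)
    also have "\<dots> = (\<Sum>m\<in>{1..j+1}. real n * real (n-1 choose (m-1)) * real ((n-m+1)^(n-m-1)) * real (m^(m-2))
           / real ((n+1)^(n-1)))"
      by (simp add: mult.assoc)
    finally show ?case by simp
  qed
  ultimately show ?thesis by (simp add: tendsto_cong borel_cdf_def)
qed

lemma borel_pmf_nonneg: "borel_pmf m \<ge> 0"
  by (simp add: borel_pmf_def)

lemma borel_cdf_pos: "borel_cdf (j+1) > 0"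
proof -
  have "borel_cdf (j+1) = borel_pmf 1 + (\<Sum>m\<in>{Suc 1..j+1}. borel_pmf m)"
    unfolding borel_cdf_def by (simp add: sum.atLeast_Suc_atMost)
  moreover have "(\<Sum>m\<in>{Suc 1..j+1}. borel_pmf m) \<ge> 0" by (intro sum_nonneg borel_pmf_nonneg)
  moreover have "borel_pmf 1 > 0" by (simp add: borel_pmf_def)
  ultimately show ?thesis by linarith
qed

theorem corollary2:
  shows "(\<forall>j::nat. (\<lambda>n. prob_first n (n - j)) \<sim>[at_top] (\<lambda>n. borel_cdf (j + 1) / real n))
         \<and> ((\<lambda>n. prob_first n n) \<sim>[at_top] (\<lambda>n. 1 / (exp 1 * real n)))"
proof -
  have part1: "(\<lambda>n. prob_first n (n - j)) \<sim>[at_top] (\<lambda>n. borel_cdf (j + 1) / real n)" for j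
  proof (rule asymp_equivI')
    define B where "B = borel_cdf (j+1)"
    have B: "B > 0" using borel_cdf_pos by (simp add: B_def)
    have "((\<lambda>n. real n * prob_first n (n-j) / B) \<longlongrightarrow> B / B) at_top"
      unfolding B_def by (intro tendsto_divide main_lim tendsto_const) (use B in \<open>simp add: B_def\<close>)
    then have lim: "((\<lambda>n. real n * prob_first n (n-j) / B) \<longlongrightarrow> 1) at_top" using B by simp
    have ev: "eventually (\<lambda>n. real n * prob_first n (n-j) / B = prob_first n (n - j) / (B / real n)) at_top"
      using eventually_ge_at_top[of 1] by eventually_elim (use B in simp)
    show "((\<lambda>n. prob_first n (n - j) / (borel_cdf (j + 1) / real n)) \<longlongrightarrow> 1) at_top"
      using Lim_transform_eventually[OF lim ev] by (simp add: B_def)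
  qed
  have "borel_cdf (0+1) = 1 / exp 1" by (simp add: borel_cdf_def borel_pmf_def exp_minus inverse_eq_divide)
  then have "(\<lambda>n. borel_cdf (0 + 1) / real n) = (\<lambda>n. 1 / (exp 1 * real n))"
    by (simp add: divide_divide_eq_left)
  then have "(\<lambda>n. prob_first n n) \<sim>[at_top] (\<lambda>n. 1 / (exp 1 * real n))"
    using part1[of 0] by simp
  then show ?thesis using part1 by blast
qed

end
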